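(* In the setting described in the context, if $\omega\in\mathbb{R}$ is an energy eigenvalue, then $m^2-\omega^2>0$.
   Context: Fix real numbers $M>0$, $a$, $Q$ with $M^2=a^2+Q^2$ (extreme Kerr–Newman black hole) and put $\rho:=M$. Fix the rest mass $m>0$ and charge $e\in\mathbb{R}$ of a Dirac particle and a half-integer $k\in\{\pm\frac12,\pm\frac32,\dots\}$. For $\omega,\lambda\in\mathbb{R}$ consider the radial system for $f:(\rho,\infty)\to\mathbb{C}^2$, $$\begin{pmatrix}(r-\rho)\frac{d}{dr}+\frac{iV(r)}{r-\rho} & imr-\lambda\\ -imr-\lambda & (r-\rho)\frac{d}{dr}-\frac{iV(r)}{r-\rho}\end{pmatrix}f(r)=0,\qquad V(r):=\omega(r^2+a^2)+ka+eQr,$$ and the angular system for $g:(0,\pi)\to\mathbb{C}^2$, $$\begin{pmatrix}\frac{d}{d\theta}+\frac{\cot\theta}{2}-W(\theta) & -am\cos\theta+\lambda\\ am\cos\theta+\lambda & -\frac{d}{d\theta}-\frac{\cot\theta}{2}-W(\theta)\end{pmatrix}g(\theta)=0,\qquad W(\theta):=a\omega\sin\theta+\frac{k}{\sin\theta}.$$ A number $\omega\in\mathbb{R}$ is called an energy eigenvalue (for azimuthal quantum number $k$) if there exist $\lambda\in\mathbb{R}$ and nontrivial solutions $f$ of the radial system and $g$ of the angular system with $$\int_\rho^\infty|f(r)|^2\frac{r^2+a^2}{(r-\rho)^2}\,dr<\infty,\qquad\int_0^\pi|g(\theta)|^2\sin\theta\,d\theta<\infty.$$ *)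

theory Defs
  imports "HOL-Analysis.Analysis"
begin

text \<open>Extreme Kerr--Newman setting; rho = M. Spinor components f = (f1, f2), g = (g1, g2).\<close>

definition half_integer :: "real \<Rightarrow> bool" where
  "half_integer k \<longleftrightarrow> (\<exists>n::int. k = real_of_int n + 1/2)"

definition radV :: "real \<Rightarrow> real \<Rightarrow> real \<Rightarrow> real \<Rightarrow> real \<Rightarrow> real \<Rightarrow> real" where
  "radV a Q e k \<omega> r = \<omega> * (r^2 + a^2) + k * a + e * Q * r"

definition angW :: "real \<Rightarrow> real \<Rightarrow> real \<Rightarrow> real \<Rightarrow> real" where
  "angW a k \<omega> \<theta> = a * \<omega> * sin \<theta> + k / sin \<theta>"

definition radial_solution ::
  "real \<Rightarrow> real \<Rightarrow> real \<Rightarrow> real \<Rightarrow> real \<Rightarrow> real \<Rightarrow> real \<Rightarrow> real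
   \<Rightarrow> (real \<Rightarrow> complex) \<Rightarrow> (real \<Rightarrow> complex) \<Rightarrow> bool" where
  "radial_solution M a Q m e k \<omega> lam f1 f2 \<longleftrightarrow>
     (\<forall>r\<in>{M<..}. \<exists>d1 d2.
        (f1 has_vector_derivative d1) (at r) \<and> (f2 has_vector_derivative d2) (at r) \<and>
        complex_of_real (r - M) * d1 + \<i> * complex_of_real (radV a Q e k \<omega> r / (r - M)) * f1 r
          + (\<i> * complex_of_real (m * r) - complex_of_real lam) * f2 r = 0 \<and>
        (- \<i> * complex_of_real (m * r) - complex_of_real lam) * f1 r
          + complex_of_real (r - M) * d2 - \<i> * complex_of_real (radV a Q e k \<omega> r / (r - M)) * f2 r = 0)"

definition angular_solution ::
  "real \<Rightarrow> real \<Rightarrow> real \<Rightarrow> real \<Rightarrow> real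
   \<Rightarrow> (real \<Rightarrow> complex) \<Rightarrow> (real \<Rightarrow> complex) \<Rightarrow> bool" where
  "angular_solution a m k \<omega> lam g1 g2 \<longleftrightarrow>
     (\<forall>\<theta>\<in>{0<..<pi}. \<exists>d1 d2.
        (g1 has_vector_derivative d1) (at \<theta>) \<and> (g2 has_vector_derivative d2) (at \<theta>) \<and>
        d1 + complex_of_real (cot \<theta> / 2) * g1 \<theta> - complex_of_real (angW a k \<omega> \<theta>) * g1 \<theta>
          + complex_of_real (- a * m * cos \<theta> + lam) * g2 \<theta> = 0 \<and>
        complex_of_real (a * m * cos \<theta> + lam) * g1 \<theta>
          - d2 - complex_of_real (cot \<theta> / 2) * g2 \<theta> - complex_of_real (angW a k \<omega> \<theta>) * g2 \<theta> = 0)"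

definition energy_eigenvalue ::
  "real \<Rightarrow> real \<Rightarrow> real \<Rightarrow> real \<Rightarrow> real \<Rightarrow> real \<Rightarrow> real \<Rightarrow> bool" where
  "energy_eigenvalue M a Q m e k \<omega> \<longleftrightarrow>
     (\<exists>lam::real. \<exists>f1 f2 g1 g2.
        radial_solution M a Q m e k \<omega> lam f1 f2 \<and>
        (\<exists>r\<in>{M<..}. f1 r \<noteq> 0 \<or> f2 r \<noteq> 0) \<and>
        angular_solution a m k \<omega> lam g1 g2 \<and>
        (\<exists>\<theta>\<in>{0<..<pi}. g1 \<theta> \<noteq> 0 \<or> g2 \<theta> \<noteq> 0) \<and>
        (\<integral>\<^sup>+ r \<in> {M<..}. ennreal ((cmod (f1 r))^2 + (cmod (f2 r))^2) * ennreal ((r^2 + a^2) / (r - M)^2) \<partial>lborel) < \<infinity> \<and>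
        (\<integral>\<^sup>+ \<theta> \<in> {0<..<pi}. ennreal ((cmod (g1 \<theta>))^2 + (cmod (g2 \<theta>))^2) * ennreal (sin \<theta>) \<partial>lborel) < \<infinity>)"

end

theory Submission
  imports Defs
begin

lemma vd_Re: "(f has_vector_derivative d) (at r) \<Longrightarrow> ((\<lambda>t. Re (f t)) has_real_derivative Re d) (at r)"
  unfolding has_vector_derivative_def has_field_derivative_def
  by (drule has_derivative_Re) (simp add: mult_commute_abs)

lemma vd_Im: "(f has_vector_derivative d) (at r) \<Longrightarrow> ((\<lambda>t. Im (f t)) has_real_derivative Im d) (at r)"
  unfolding has_vector_derivative_def has_field_derivative_def
  by (drule has_derivative_Im) (simp add: mult_commute_abs)

lemma eqs:
  fixes u W mu lam :: real and z1 z2 w1 w2 :: complex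
  assumes "complex_of_real u * w1 + \<i> * complex_of_real W * z1 + (\<i> * complex_of_real mu - complex_of_real lam) * z2 = 0"
    and "(- \<i> * complex_of_real mu - complex_of_real lam) * z1 + complex_of_real u * w2 - \<i> * complex_of_real W * z2 = 0"
  shows "u * Re w1 - W * Im z1 - mu * Im z2 - lam * Re z2 = 0"
    "u * Im w1 + W * Re z1 + mu * Re z2 - lam * Im z2 = 0"
    "mu * Im z1 - lam * Re z1 + u * Re w2 + W * Im z2 = 0"
    "- mu * Re z1 - lam * Im z1 + u * Im w2 - W * Re z2 = 0"
  using arg_cong[OF assms(1), of Re] arg_cong[OF assms(1), of Im]
     arg_cong[OF assms(2), of Re] arg_cong[OF assms(2), of Im]
  by (simp_all add: algebra_simps)

definition NN :: "(real \<Rightarrow> complex) \<Rightarrow> (real \<Rightarrow> complex) \<Rightarrow> real \<Rightarrow> real" where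
  "NN f1 f2 t = (Re (f1 t))^2 + (Im (f1 t))^2 + (Re (f2 t))^2 + (Im (f2 t))^2"
definition RR :: "(real \<Rightarrow> complex) \<Rightarrow> (real \<Rightarrow> complex) \<Rightarrow> real \<Rightarrow> real" where
  "RR f1 f2 t = Re (f1 t) * Re (f2 t) + Im (f1 t) * Im (f2 t)"
definition II :: "(real \<Rightarrow> complex) \<Rightarrow> (real \<Rightarrow> complex) \<Rightarrow> real \<Rightarrow> real" where
  "II f1 f2 t = Re (f1 t) * Im (f2 t) - Im (f1 t) * Re (f2 t)"
definition WW :: "real \<Rightarrow> real \<Rightarrow> real \<Rightarrow> real \<Rightarrow> real \<Rightarrow> real \<Rightarrow> real \<Rightarrow> real" where
  "WW M a Q e k \<omega> t = radV a Q e k \<omega> t / (t - M)"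
definition FF where
  "FF M a Q m e k \<omega> lam f1 f2 t = WW M a Q e k \<omega> t * NN f1 f2 t + 2*m*t*RR f1 f2 t - 2*lam*II f1 f2 t"

lemma WW_deriv:
  assumes "t > M"
  shows "(WW M a Q e k \<omega> has_real_derivative (\<omega> - radV a Q e k \<omega> M / (t - M)^2)) (at t)"
proof -
  have "((\<lambda>t. radV a Q e k \<omega> t / (t - M)) has_real_derivative
      ((2*\<omega>*t + e*Q) * (t - M) - radV a Q e k \<omega> t * 1) / (t - M)^2) (at t)"
    unfolding radV_def using assms
    by (auto intro!: derivative_eq_intros simp: power2_eq_square)
  moreover have "((2*\<omega>*t + e*Q) * (t - M) - radV a Q e k \<omega> t * 1) / (t - M)^2
     = \<omega> - radV a Q e k \<omega> M / (t - M)^2"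
  proof -
    have 1: "(2*\<omega>*t + e*Q) * (t - M) - radV a Q e k \<omega> t * 1 = \<omega> * (t - M)^2 - radV a Q e k \<omega> M"
      unfolding radV_def by algebra
    have 2: "(t - M)^2 \<noteq> 0" using assms by simp
    show ?thesis unfolding 1 using 2 by (simp add: diff_divide_distrib)
  qed
  ultimately show ?thesis unfolding WW_def[abs_def] by simp
qed

lemma rad_derivs:
  assumes sol: "radial_solution M a Q m e k \<omega> lam f1 f2" and t: "t > M"
  shows "(NN f1 f2 has_real_derivative (4*m*t*II f1 f2 t + 4*lam*RR f1 f2 t)/(t-M)) (at t)"
    and "(FF M a Q m e k \<omega> lam f1 f2 has_real_derivative
           ((\<omega> - radV a Q e k \<omega> M/(t-M)^2) * NN f1 f2 t + 2*m*RR f1 f2 t)) (at t)"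
proof -
  obtain d1 d2 where D1: "(f1 has_vector_derivative d1) (at t)" and D2: "(f2 has_vector_derivative d2) (at t)"
    and E1: "complex_of_real (t - M) * d1 + \<i> * complex_of_real (radV a Q e k \<omega> t / (t - M)) * f1 t
          + (\<i> * complex_of_real (m * t) - complex_of_real lam) * f2 t = 0"
    and E2: "(- \<i> * complex_of_real (m * t) - complex_of_real lam) * f1 t
          + complex_of_real (t - M) * d2 - \<i> * complex_of_real (radV a Q e k \<omega> t / (t - M)) * f2 t = 0"
    using sol t unfolding radial_solution_def by fastforce
  define u where "u = t - M"
  define W where "W = radV a Q e k \<omega> t / (t - M)"
  have u: "u > 0" using t u_def by simp
  note ee = eqs[OF E1 E2, folded u_def W_def]
  have p1: "Re d1 = (W * Im (f1 t) + m*t * Im (f2 t) + lam * Re (f2 t)) / u"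
    using ee(1) u by (simp add: field_simps)
  have q1: "Im d1 = (- W * Re (f1 t) - m*t * Re (f2 t) + lam * Im (f2 t)) / u"
    using ee(2) u by (simp add: field_simps)
  have p2: "Re d2 = (- m*t * Im (f1 t) + lam * Re (f1 t) - W * Im (f2 t)) / u"
    using ee(3) u by (simp add: field_simps)
  have q2: "Im d2 = (m*t * Re (f1 t) + lam * Im (f1 t) + W * Re (f2 t)) / u"
    using ee(4) u by (simp add: field_simps)
  note x1 = vd_Re[OF D1] and y1 = vd_Im[OF D1] and x2 = vd_Re[OF D2] and y2 = vd_Im[OF D2]
  have dN: "(NN f1 f2 has_real_derivative
      2 * Re (f1 t) * Re d1 + 2 * Im (f1 t) * Im d1 + 2 * Re (f2 t) * Re d2 + 2 * Im (f2 t) * Im d2) (at t)"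
    unfolding NN_def[abs_def]
    by (rule derivative_eq_intros x1 y1 x2 y2 refl | simp)+
  have dR: "(RR f1 f2 has_real_derivative
      Re d1 * Re (f2 t) + Re (f1 t) * Re d2 + Im d1 * Im (f2 t) + Im (f1 t) * Im d2) (at t)"
    unfolding RR_def[abs_def]
    by (rule derivative_eq_intros x1 y1 x2 y2 refl | simp)+
  have dI: "(II f1 f2 has_real_derivative
      Re d1 * Im (f2 t) + Re (f1 t) * Im d2 - Im d1 * Re (f2 t) - Im (f1 t) * Re d2) (at t)"
    unfolding II_def[abs_def]
    by (rule derivative_eq_intros x1 y1 x2 y2 refl | simp)+
  have "2 * Re (f1 t) * Re d1 + 2 * Im (f1 t) * Im d1 + 2 * Re (f2 t) * Re d2 + 2 * Im (f2 t) * Im d2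
     = (4*m*t*II f1 f2 t + 4*lam*RR f1 f2 t)/(t-M)"
    unfolding p1 q1 p2 q2 II_def RR_def u_def[symmetric] using u
    by (simp add: field_simps)
  with dN show "(NN f1 f2 has_real_derivative (4*m*t*II f1 f2 t + 4*lam*RR f1 f2 t)/(t-M)) (at t)" by simp
  have dW: "(WW M a Q e k \<omega> has_real_derivative (\<omega> - radV a Q e k \<omega> M / (t - M)^2)) (at t)"
    by (rule WW_deriv[OF t])
  have WWt: "WW M a Q e k \<omega> t = W" unfolding WW_def W_def ..
  have dF: "(FF M a Q m e k \<omega> lam f1 f2 has_real_derivative
     (\<omega> - radV a Q e k \<omega> M / (t - M)^2) * NN f1 f2 t + W *
      (2 * Re (f1 t) * Re d1 + 2 * Im (f1 t) * Im d1 + 2 * Re (f2 t) * Re d2 + 2 * Im (f2 t) * Im d2)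
     + (2*m*RR f1 f2 t + 2*m*t*(Re d1 * Re (f2 t) + Re (f1 t) * Re d2 + Im d1 * Im (f2 t) + Im (f1 t) * Im d2))
     - 2*lam*(Re d1 * Im (f2 t) + Re (f1 t) * Im d2 - Im d1 * Re (f2 t) - Im (f1 t) * Re d2)) (at t)"
    unfolding FF_def[abs_def]
    by (rule derivative_eq_intros dW dN dR dI refl | simp add: WWt)+
  have "W * (2 * Re (f1 t) * Re d1 + 2 * Im (f1 t) * Im d1 + 2 * Re (f2 t) * Re d2 + 2 * Im (f2 t) * Im d2)
     + 2*m*t*(Re d1 * Re (f2 t) + Re (f1 t) * Re d2 + Im d1 * Im (f2 t) + Im (f1 t) * Im d2)
     - 2*lam*(Re d1 * Im (f2 t) + Re (f1 t) * Im d2 - Im d1 * Re (f2 t) - Im (f1 t) * Re d2) = 0"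
    unfolding p1 q1 p2 q2 using u
    by (simp add: field_simps)
  then show "(FF M a Q m e k \<omega> lam f1 f2 has_real_derivative
           ((\<omega> - radV a Q e k \<omega> M/(t-M)^2) * NN f1 f2 t + 2*m*RR f1 f2 t)) (at t)"
    using dF by (simp add: algebra_simps)
qed

lemma div_lower:
  fixes g :: "real \<Rightarrow> ennreal"
  assumes "x0 < a" "a \<le> b" "0 \<le> c" "{a..b} \<subseteq> S"
    and g: "\<And>x. x \<in> {a..b} \<Longrightarrow> ennreal (c / (x - x0)) \<le> g x"
  shows "ennreal (c * (ln (b - x0) - ln (a - x0))) \<le> (\<integral>\<^sup>+x\<in>S. g x \<partial>lborel)"
proof -
  have hi: "((\<lambda>x. c / (x - x0)) has_integral (c * ln (b - x0) - c * ln (a - x0))) {a..b}"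
  proof (rule fundamental_theorem_of_calculus[OF assms(2)])
    fix x assume x: "x \<in> {a..b}"
    then have "x - x0 > 0" using assms by auto
    then show "((\<lambda>x. c * ln (x - x0)) has_vector_derivative c / (x - x0)) (at x within {a..b})"
      by (auto intro!: derivative_eq_intros simp: has_real_derivative_iff_has_vector_derivative[symmetric])
  qed
  have eq: "(\<integral>\<^sup>+x. ennreal (c / (x - x0)) * indicator {a..b} x \<partial>lborel) = ennreal (c * ln (b - x0) - c * ln (a - x0))"
    by (rule nn_integral_has_integral_lebesgue'[OF _ hi]) (use assms in auto)
  have mono: "(\<integral>\<^sup>+x. ennreal (c / (x - x0)) * indicator {a..b} x \<partial>lborel) \<le> (\<integral>\<^sup>+x\<in>S. g x \<partial>lborel)"
  proof (rule nn_integral_mono)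
    fix x show "ennreal (c / (x - x0)) * indicator {a..b} x \<le> g x * indicator S x"
      using g[of x] assms(4) by (cases "x \<in> {a..b}") (auto simp: indicator_def)
  qed
  show ?thesis using mono unfolding eq by (simp add: right_diff_distrib)
qed

lemma NN_nonneg: "0 \<le> NN f1 f2 t" unfolding NN_def by simp

lemma RR_bound: "\<bar>RR f1 f2 t\<bar> \<le> NN f1 f2 t / 2"
proof -
  have "(Re (f1 t) + Re (f2 t))^2 + (Im (f1 t) + Im (f2 t))^2 = NN f1 f2 t + 2 * RR f1 f2 t"
       "(Re (f1 t) - Re (f2 t))^2 + (Im (f1 t) - Im (f2 t))^2 = NN f1 f2 t - 2 * RR f1 f2 t"
    unfolding RR_def NN_def by (simp_all add: power2_eq_square algebra_simps)
  moreover have "0 \<le> (Re (f1 t) + Re (f2 t))^2 + (Im (f1 t) + Im (f2 t))^2"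
       "0 \<le> (Re (f1 t) - Re (f2 t))^2 + (Im (f1 t) - Im (f2 t))^2" by simp_all
  ultimately show ?thesis by (simp add: abs_le_iff)
qed

lemma II_bound: "\<bar>II f1 f2 t\<bar> \<le> NN f1 f2 t / 2"
proof -
  have "(Re (f1 t) + Im (f2 t))^2 + (Im (f1 t) - Re (f2 t))^2 = NN f1 f2 t + 2 * II f1 f2 t"
       "(Re (f1 t) - Im (f2 t))^2 + (Im (f1 t) + Re (f2 t))^2 = NN f1 f2 t - 2 * II f1 f2 t"
    unfolding II_def NN_def by (simp_all add: power2_eq_square algebra_simps)
  moreover have "0 \<le> (Re (f1 t) + Im (f2 t))^2 + (Im (f1 t) - Re (f2 t))^2"
       "0 \<le> (Re (f1 t) - Im (f2 t))^2 + (Im (f1 t) + Re (f2 t))^2" by simp_all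
  ultimately show ?thesis by (simp add: abs_le_iff)
qed

lemma RI_bound: "(RR f1 f2 t)^2 + (II f1 f2 t)^2 \<le> (NN f1 f2 t)^2 / 4"
proof -
  have "0 \<le> ((Re (f1 t))^2 + (Im (f1 t))^2 - (Re (f2 t))^2 - (Im (f2 t))^2)^2" by simp
  then show ?thesis unfolding II_def NN_def RR_def by (simp add: power2_eq_square algebra_simps)
qed

lemma int_inf:
  assumes fin: "(\<integral>\<^sup>+x\<in>{M<..}. ennreal (NN f1 f2 x) * ennreal ((x^2+a^2)/(x-M)^2) \<partial>lborel) < \<infinity>"
    and M: "M > 0" and c: "c > 0" and T: "T > M" and lb: "\<And>x. x \<ge> T \<Longrightarrow> c \<le> NN f1 f2 x * x"
  shows False
proof -
  obtain B where B: "B \<ge> 0" "(\<integral>\<^sup>+x\<in>{M<..}. ennreal (NN f1 f2 x) * ennreal ((x^2+a^2)/(x-M)^2) \<partial>lborel) = ennreal B"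
    using fin less_top_ennreal by auto
  define b where "b = T * exp (B / c + 1)"
  have "T \<le> b" unfolding b_def using T M c B by (simp add: mult_le_cancel_left1)
  have "ennreal (c * (ln (b - 0) - ln (T - 0))) \<le> ennreal B"
    unfolding B(2)[symmetric]
  proof (rule div_lower)
    show "0 < T" "T \<le> b" "0 \<le> c" using T M c \<open>T \<le> b\<close> by auto
    show "{T..b} \<subseteq> {M<..}" using T by auto
    fix x assume x: "x \<in> {T..b}"
    then have x0: "x > 0" "x > M" using T M by auto
    have w: "(x^2+a^2)/(x-M)^2 \<ge> 1"
    proof -
      have "(x - M)^2 \<le> x^2" using x0 M by (intro power_mono) auto
      also have "\<dots> \<le> x^2 + a^2" by simp
      finally show ?thesis using x0 by simp
    qed
    have "c / (x - 0) \<le> NN f1 f2 x" using lb[of x] x x0 by (simp add: divide_le_eq mult.commute)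
    also have "\<dots> \<le> NN f1 f2 x * ((x^2+a^2)/(x-M)^2)" using mult_left_mono[OF w NN_nonneg[of f1 f2 x]]
      by simp
    finally show "ennreal (c / (x - 0)) \<le> ennreal (NN f1 f2 x) * ennreal ((x^2+a^2)/(x-M)^2)"
      by (simp add: ennreal_mult'[symmetric] NN_nonneg ennreal_leI)
  qed
  moreover have "c * (ln (b - 0) - ln (T - 0)) = B + c"
    unfolding b_def using T M c by (simp add: ln_mult field_simps)
  ultimately show False using B c by simp
qed

lemma int_hor:
  assumes fin: "(\<integral>\<^sup>+x\<in>{M<..}. ennreal (NN f1 f2 x) * ennreal ((x^2+a^2)/(x-M)^2) \<partial>lborel) < \<infinity>"
    and M: "M > 0" and c: "c > 0" and d: "d > 0" and lb: "\<And>x. M < x \<Longrightarrow> x < M + d \<Longrightarrow> c * (x - M) \<le> NN f1 f2 x"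
  shows False
proof -
  obtain B where B: "B \<ge> 0" "(\<integral>\<^sup>+x\<in>{M<..}. ennreal (NN f1 f2 x) * ennreal ((x^2+a^2)/(x-M)^2) \<partial>lborel) = ennreal B"
    using fin less_top_ennreal by auto
  define C where "C = c * M^2"
  have C: "C > 0" unfolding C_def using c M by simp
  define b where "b = M + d/2"
  define a' where "a' = M + (d/2) * exp (- (B / C + 1))"
  have "B / C \<ge> 0" using B C by simp
  then have ea: "exp (- (B / C + 1)) < 1" by simp
  have a'b: "M < a'" "a' \<le> b" unfolding a'_def b_def using d ea by auto
  have "ennreal (C * (ln (b - M) - ln (a' - M))) \<le> ennreal B"
    unfolding B(2)[symmetric]
  proof (rule div_lower)
    show "M < a'" "a' \<le> b" "0 \<le> C" using a'b C by auto
    show "{a'..b} \<subseteq> {M<..}" using a'b by auto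
    fix x assume x: "x \<in> {a'..b}"
    then have x0: "x > M" "x < M + d" using a'b d unfolding b_def by auto
    have gen: "\<And>u::real. u \<noteq> 0 \<Longrightarrow> c * M^2 / u = c * u * (M^2 / u^2)"
      by (simp add: field_simps power2_eq_square)
    have "C / (x - M) = c * (x - M) * (M^2 / (x - M)^2)" unfolding C_def using x0
      by (intro gen) simp
    also have "\<dots> \<le> NN f1 f2 x * ((x^2+a^2)/(x-M)^2)"
    proof (rule mult_mono)
      show "c * (x - M) \<le> NN f1 f2 x" using lb x0 by auto
      have "M^2 \<le> x^2 + a^2" using x0 M by (smt (verit) power_mono zero_le_power2)
      then show "M^2 / (x - M)^2 \<le> (x^2+a^2)/(x-M)^2" by (simp add: divide_right_mono)
    qed (auto simp: NN_nonneg)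
    finally show "ennreal (C / (x - M)) \<le> ennreal (NN f1 f2 x) * ennreal ((x^2+a^2)/(x-M)^2)"
      by (simp add: ennreal_mult'[symmetric] NN_nonneg ennreal_leI)
  qed
  moreover have "C * (ln (b - M) - ln (a' - M)) = B + C"
  proof -
    have "ln (d/2 * exp (-(B/C+1))) = ln (d/2) - (B/C+1)" using d by (subst ln_mult) auto
    then show ?thesis unfolding b_def a'_def using C by (simp add: field_simps)
  qed
  ultimately show False using B C by simp
qed

lemma leftward:
  fixes g g' :: "real \<Rightarrow> real"
  assumes ab: "a \<le> b" and d: "\<And>x. a \<le> x \<Longrightarrow> x \<le> b \<Longrightarrow> (g has_real_derivative g' x) (at x)"
    and le: "\<And>x. a \<le> x \<Longrightarrow> x \<le> b \<Longrightarrow> g' x \<le> K * g x"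
  shows "g b * exp (- K * (b - a)) \<le> g a"
proof -
  have "(\<lambda>x. g x * exp (- K * x)) b \<le> (\<lambda>x. g x * exp (- K * x)) a"
  proof (rule DERIV_nonpos_imp_nonincreasing[OF ab])
    fix x assume x: "a \<le> x" "x \<le> b"
    have "((\<lambda>x. g x * exp (- K * x)) has_real_derivative g' x * exp (- K * x) + g x * (exp (- K * x) * (- K))) (at x)"
      by (auto intro!: derivative_eq_intros d x)
    moreover have "g' x * exp (- K * x) + g x * (exp (- K * x) * (- K)) = (g' x - K * g x) * exp (- K * x)"
      by (simp add: algebra_simps)
    moreover have "(g' x - K * g x) * exp (- K * x) \<le> 0"
      using le[OF x] by (simp add: mult_nonpos_nonneg)
    ultimately show "\<exists>y. ((\<lambda>x. g x * exp (- K * x)) has_real_derivative y) (at x) \<and> y \<le> 0" by auto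
  qed
  then have "g b * exp (- K * b) * exp (K * a) \<le> g a * exp (- K * a) * exp (K * a)"
    by (simp add: mult_right_mono)
  then show ?thesis by (simp add: mult.assoc exp_add[symmetric] algebra_simps)
qed

lemma lin_bound: "\<bar>B * RR f1 f2 t + C * II f1 f2 t\<bar> \<le> (\<bar>B\<bar> + \<bar>C\<bar>) / 2 * NN f1 f2 t"
proof -
  have "\<bar>B * RR f1 f2 t + C * II f1 f2 t\<bar> \<le> \<bar>B\<bar> * \<bar>RR f1 f2 t\<bar> + \<bar>C\<bar> * \<bar>II f1 f2 t\<bar>"
    by (metis abs_mult abs_triangle_ineq)
  also have "\<dots> \<le> \<bar>B\<bar> * (NN f1 f2 t / 2) + \<bar>C\<bar> * (NN f1 f2 t / 2)"
    by (intro add_mono mult_left_mono RR_bound II_bound) auto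
  finally show ?thesis by (simp add: field_simps)
qed

context
  fixes M a Q m e k \<omega> lam :: real and f1 f2 :: "real \<Rightarrow> complex" and r0 :: real
  assumes M: "M > 0" and m: "m > 0"
    and sol: "radial_solution M a Q m e k \<omega> lam f1 f2"
    and fin: "(\<integral>\<^sup>+x\<in>{M<..}. ennreal (NN f1 f2 x) * ennreal ((x^2+a^2)/(x-M)^2) \<partial>lborel) < \<infinity>"
    and r0: "r0 > M" "NN f1 f2 r0 > 0"
    and om: "m \<le> \<bar>\<omega>\<bar>"
begin

lemma W_id: "t > M \<Longrightarrow> WW M a Q e k \<omega> t = radV a Q e k \<omega> M / (t - M) + (2*\<omega>*M + e*Q) + \<omega>*(t-M)"
proof -
  assume t: "t > M"
  have "radV a Q e k \<omega> t = radV a Q e k \<omega> M + (2*\<omega>*M + e*Q) * (t - M) + \<omega>*(t-M)^2"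
    unfolding radV_def by algebra
  then show ?thesis unfolding WW_def using t by (simp add: field_simps power2_eq_square)
qed

lemma N_pos: assumes r1: "M < r1" "r1 \<le> r0" shows "NN f1 f2 r1 > 0"
proof -
  define K where "K = (2*m*r0 + 2*\<bar>lam\<bar>) / (r1 - M)"
  have "NN f1 f2 r0 * exp (- K * (r0 - r1)) \<le> NN f1 f2 r1"
  proof (rule leftward[OF r1(2)])
    fix x assume x: "r1 \<le> x" "x \<le> r0"
    then show "(NN f1 f2 has_real_derivative (4*m*x*II f1 f2 x + 4*lam*RR f1 f2 x)/(x-M)) (at x)"
      using rad_derivs(1)[OF sol] r1 by auto
    have "4*m*x*II f1 f2 x + 4*lam*RR f1 f2 x \<le> \<bar>(4*lam) * RR f1 f2 x + (4*m*x) * II f1 f2 x\<bar>"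
      by (simp add: algebra_simps)
    also have "\<dots> \<le> (\<bar>4*lam\<bar> + \<bar>4*m*x\<bar>) / 2 * NN f1 f2 x" by (rule lin_bound)
    also have "\<dots> \<le> (2*m*r0 + 2*\<bar>lam\<bar>) * NN f1 f2 x"
      using x r1 M m NN_nonneg[of f1 f2 x] by (intro mult_right_mono) (auto simp: abs_mult)
    finally have num: "4*m*x*II f1 f2 x + 4*lam*RR f1 f2 x \<le> (2*m*r0 + 2*\<bar>lam\<bar>) * NN f1 f2 x" .
    have "(4*m*x*II f1 f2 x + 4*lam*RR f1 f2 x)/(x-M) \<le> (2*m*r0 + 2*\<bar>lam\<bar>) * NN f1 f2 x / (r1 - M)"
      by (rule frac_le) (use num x r1 m M NN_nonneg[of f1 f2 x] in auto)
    then show "(4*m*x*II f1 f2 x + 4*lam*RR f1 f2 x)/(x-M) \<le> K * NN f1 f2 x"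
      unfolding K_def by simp
  qed
  moreover have "NN f1 f2 r0 * exp (- K * (r0 - r1)) > 0" using r0 by simp
  ultimately show ?thesis by linarith
qed

lemma caseA: assumes V0: "radV a Q e k \<omega> M \<noteq> 0" shows False
proof -
  define V0 where "V0 = radV a Q e k \<omega> M"
  define V1 where "V1 = 2*\<omega>*M + e*Q"
  define \<sigma> where "\<sigma> = (if V0 > 0 then 1 else -1::real)"
  have sV: "\<sigma> * V0 = \<bar>V0\<bar>" and sa: "\<bar>\<sigma>\<bar> = 1" unfolding \<sigma>_def by auto
  have aV: "\<bar>V0\<bar> > 0" using V0 V0_def by simp
  define N where "N = NN f1 f2"
  define R where "R = RR f1 f2"
  define I where "I = II f1 f2"
  define F where "F = FF M a Q m e k \<omega> lam f1 f2"
  define C2 where "C2 = \<bar>V1\<bar> + \<bar>\<omega>\<bar> + m*(M+1) + \<bar>lam\<bar>"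
  have mM: "m*(M+1) > 0" "m*(M+2) > 0" using m M by simp_all
  have C2: "C2 > 0" unfolding C2_def using mM abs_ge_zero[of V1] abs_ge_zero[of \<omega>] abs_ge_zero[of lam] by linarith
  define C1 where "C1 = \<bar>V1\<bar> + 2*\<bar>\<omega>\<bar> + m*(M+2) + \<bar>lam\<bar>"
  have C1: "C1 \<ge> 0" unfolding C1_def using mM abs_ge_zero[of V1] abs_ge_zero[of \<omega>] abs_ge_zero[of lam] by linarith
  define \<delta> where "\<delta> = min 1 (\<bar>V0\<bar> / (2*C2))"
  have \<delta>: "\<delta> > 0" "\<delta> \<le> 1" "\<delta> * C2 \<le> \<bar>V0\<bar> / 2"
    unfolding \<delta>_def using aV C2 by (auto simp: min_def field_simps)
  define H where "H = (\<lambda>x. \<sigma> * ((x - M) * F x))"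
  define HD where "HD = (\<lambda>x. \<sigma> * ((V1 + 2*\<omega>*(x-M)) * N x + (2*m*(x + (x-M))) * R x + (- 2*lam) * I x))"
  have Nn: "\<And>x. N x \<ge> 0" unfolding N_def by (rule NN_nonneg)
  have Hder: "(H has_real_derivative HD x) (at x)" if x: "x > M" for x
  proof -
    have "(H has_real_derivative \<sigma> * (1 * F x + (x - M) * ((\<omega> - V0/(x-M)^2) * N x + 2*m*R x))) (at x)"
      unfolding H_def using rad_derivs(2)[OF sol x]
      unfolding F_def N_def R_def V0_def
      by (auto intro!: derivative_eq_intros)
    moreover have "\<sigma> * (1 * F x + (x - M) * ((\<omega> - V0/(x-M)^2) * N x + 2*m*R x)) = HD x"
    proof -
      have gen: "\<And>u n r::real. u \<noteq> 0 \<Longrightarrow> u*((\<omega> - V0/u^2)*n + 2*m*r) = (\<omega>*u - V0/u)*n + 2*m*u*r"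
        by (simp add: field_simps power2_eq_square)
      show ?thesis
        unfolding HD_def F_def FF_def W_id[OF x] N_def[symmetric] R_def[symmetric] I_def[symmetric]
          V0_def[symmetric] V1_def[symmetric] gen[of "x - M", OF _] using x
        by (simp add: gen field_simps) algebra
    qed
    ultimately show ?thesis by simp
  qed
  have Heq: "H x = \<bar>V0\<bar> * N x + \<sigma> * (V1*(x-M) + \<omega>*(x-M)^2) * N x
      + (\<sigma> * (2*m*x*(x-M))) * R x + (\<sigma> * (-2*lam*(x-M))) * I x" if x: "x > M" for x
    unfolding H_def F_def FF_def W_id[OF x] N_def[symmetric] R_def[symmetric] I_def[symmetric]
        V0_def[symmetric] V1_def[symmetric] sV[symmetric]
    using x by (simp add: field_simps power2_eq_square)
  have Kb: "\<bar>V1\<bar>*(x-M) + \<bar>\<omega>\<bar>*(x-M)^2 + m*x*(x-M) + \<bar>lam\<bar>*(x-M) \<le> \<bar>V0\<bar>/2"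
    if x: "M < x" "x \<le> M + \<delta>" for x
  proof -
    have u: "0 < x - M" "x - M \<le> 1" "x - M \<le> \<delta>" using x \<delta> by auto
    have "(x-M)^2 \<le> x - M" using u by (simp add: power2_eq_square mult_le_cancel_left1)
    then have "\<bar>\<omega>\<bar>*(x-M)^2 \<le> \<bar>\<omega>\<bar>*(x-M)" by (simp add: mult_left_mono)
    moreover have "m*x*(x-M) \<le> m*(M+1)*(x-M)" using u m x by (intro mult_right_mono) auto
    ultimately have "\<bar>V1\<bar>*(x-M) + \<bar>\<omega>\<bar>*(x-M)^2 + m*x*(x-M) + \<bar>lam\<bar>*(x-M) \<le> (x-M) * C2"
      unfolding C2_def by (simp add: algebra_simps)
    also have "\<dots> \<le> \<delta> * C2" using u C2 by (simp add: mult_right_mono)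
    finally show ?thesis using \<delta> by linarith
  qed
  have Hbounds: "\<bar>V0\<bar>/2 * N x \<le> H x \<and> H x \<le> 2*\<bar>V0\<bar> * N x" if x: "M < x" "x \<le> M + \<delta>" for x
  proof -
    have u: "0 < x - M" using x by auto
    have b1: "\<bar>\<sigma> * (V1*(x-M) + \<omega>*(x-M)^2) * N x\<bar> \<le> (\<bar>V1\<bar>*(x-M) + \<bar>\<omega>\<bar>*(x-M)^2) * N x"
    proof -
      have "\<bar>\<sigma> * (V1*(x-M) + \<omega>*(x-M)^2)\<bar> = \<bar>V1*(x-M) + \<omega>*(x-M)^2\<bar>"
        using sa by (simp add: abs_mult)
      also have "\<dots> \<le> \<bar>V1*(x-M)\<bar> + \<bar>\<omega>*(x-M)^2\<bar>" by (rule abs_triangle_ineq)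
      also have "\<dots> = \<bar>V1\<bar>*(x-M) + \<bar>\<omega>\<bar>*(x-M)^2" using u by (simp add: abs_mult)
      finally have "\<bar>\<sigma> * (V1*(x-M) + \<omega>*(x-M)^2)\<bar> \<le> \<bar>V1\<bar>*(x-M) + \<bar>\<omega>\<bar>*(x-M)^2" .
      then show ?thesis using Nn[of x] by (simp add: abs_mult mult_right_mono)
    qed
    have b2: "\<bar>(\<sigma> * (2*m*x*(x-M))) * R x + (\<sigma> * (-2*lam*(x-M))) * I x\<bar> \<le> (m*x*(x-M) + \<bar>lam\<bar>*(x-M)) * N x"
    proof -
      have "\<bar>(\<sigma> * (2*m*x*(x-M))) * R x + (\<sigma> * (-2*lam*(x-M))) * I x\<bar>
          \<le> (\<bar>\<sigma> * (2*m*x*(x-M))\<bar> + \<bar>\<sigma> * (-2*lam*(x-M))\<bar>) / 2 * N x"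
        unfolding R_def I_def N_def by (rule lin_bound)
      also have "(\<bar>\<sigma> * (2*m*x*(x-M))\<bar> + \<bar>\<sigma> * (-2*lam*(x-M))\<bar>) / 2 = m*x*(x-M) + \<bar>lam\<bar>*(x-M)"
        using sa u m x M by (simp add: abs_mult)
      finally show ?thesis .
    qed
    have K: "(\<bar>V1\<bar>*(x-M) + \<bar>\<omega>\<bar>*(x-M)^2 + m*x*(x-M) + \<bar>lam\<bar>*(x-M)) * N x \<le> \<bar>V0\<bar>/2 * N x"
      using Kb[OF x] Nn[of x] by (rule mult_right_mono)
    show ?thesis using Heq[OF u[simplified]] b1 b2 K Nn[of x] aV
      by (simp add: algebra_simps abs_le_iff) linarith
  qed
  have HDb: "HD x \<le> C1 * N x" if x: "M < x" "x \<le> M + 1" for x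
  proof -
    have u: "0 < x - M" "x - M \<le> 1" using x by auto
    have "HD x \<le> \<bar>HD x\<bar>" by simp
    also have "\<bar>HD x\<bar> = \<bar>(V1 + 2*\<omega>*(x-M)) * N x + ((2*m*(x + (x-M))) * R x + (- 2*lam) * I x)\<bar>"
      unfolding HD_def using sa by (simp only: abs_mult add.assoc) simp
    also have "\<dots> \<le> \<bar>(V1 + 2*\<omega>*(x-M)) * N x\<bar> + \<bar>(2*m*(x + (x-M))) * R x + (- 2*lam) * I x\<bar>"
      by (rule abs_triangle_ineq)
    also have "\<dots> \<le> (\<bar>V1\<bar> + 2*\<bar>\<omega>\<bar>) * N x + (\<bar>2*m*(x + (x-M))\<bar> + \<bar>- 2*lam\<bar>) / 2 * N x"
    proof (rule add_mono)
      have "\<bar>V1 + 2*\<omega>*(x-M)\<bar> \<le> \<bar>V1\<bar> + 2*\<bar>\<omega>\<bar>"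
      proof -
        have "\<bar>2*\<omega>*(x-M)\<bar> \<le> 2*\<bar>\<omega>\<bar>" using u by (simp add: abs_mult mult_left_le)
        then show ?thesis by linarith
      qed
      then show "\<bar>(V1 + 2*\<omega>*(x-M)) * N x\<bar> \<le> (\<bar>V1\<bar> + 2*\<bar>\<omega>\<bar>) * N x"
        using Nn[of x] by (simp add: abs_mult mult_right_mono)
      show "\<bar>(2*m*(x + (x-M))) * R x + (- 2*lam) * I x\<bar> \<le> (\<bar>2*m*(x + (x-M))\<bar> + \<bar>- 2*lam\<bar>) / 2 * N x"
        unfolding R_def I_def N_def by (rule lin_bound)
    qed
    also have "\<dots> \<le> C1 * N x"
    proof -
      have "(\<bar>2*m*(x + (x-M))\<bar> + \<bar>- 2*lam\<bar>) / 2 = m*(x + (x-M)) + \<bar>lam\<bar>"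
        using m u M by (simp add: abs_mult)
      moreover have "m*(x + (x-M)) \<le> m*(M+2)" using m x by (intro mult_left_mono) auto
      ultimately have "(\<bar>V1\<bar> + 2*\<bar>\<omega>\<bar>) + (\<bar>2*m*(x + (x-M))\<bar> + \<bar>- 2*lam\<bar>) / 2 \<le> C1"
        unfolding C1_def by linarith
      then have "((\<bar>V1\<bar> + 2*\<bar>\<omega>\<bar>) + (\<bar>2*m*(x + (x-M))\<bar> + \<bar>- 2*lam\<bar>) / 2) * N x \<le> C1 * N x"
        by (rule mult_right_mono[OF _ Nn])
      then show ?thesis by (simp only: distrib_right)
    qed
    finally show ?thesis .
  qed
  define r1 where "r1 = min r0 (M + \<delta>)"
  have r1: "M < r1" "r1 \<le> r0" "r1 \<le> M + \<delta>" unfolding r1_def using r0 \<delta> by auto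
  have Hr1: "H r1 > 0"
  proof -
    have "0 < \<bar>V0\<bar>/2 * N r1" using N_pos[OF r1(1,2)] aV unfolding N_def by simp
    then show ?thesis using Hbounds[OF r1(1,3)] by linarith
  qed
  define Kc where "Kc = 2 * C1 / \<bar>V0\<bar>"
  have Kc: "Kc \<ge> 0" unfolding Kc_def using C1 aV by simp
  define c0 where "c0 = H r1 * exp (- Kc)"
  have c0: "c0 > 0" unfolding c0_def using Hr1 by simp
  have Nlow: "c0 / (2*\<bar>V0\<bar>) \<le> N x" if x: "M < x" "x \<le> r1" for x
  proof -
    have "H r1 * exp (- Kc * (r1 - x)) \<le> H x"
    proof (rule leftward[OF x(2)])
      fix y assume y: "x \<le> y" "y \<le> r1"
      show "(H has_real_derivative HD y) (at y)" using Hder y x by auto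
      have "HD y \<le> C1 * N y" using HDb y x r1 \<delta> by auto
      also have "C1 * N y \<le> Kc * H y"
      proof -
        have "\<bar>V0\<bar>/2 * N y \<le> H y" using Hbounds y x r1 by auto
        then have "Kc * (\<bar>V0\<bar>/2 * N y) \<le> Kc * H y" using Kc by (rule mult_left_mono)
        moreover have "Kc * (\<bar>V0\<bar>/2 * N y) = C1 * N y" unfolding Kc_def using aV by simp
        ultimately show ?thesis by linarith
      qed
      finally show "HD y \<le> Kc * H y" .
    qed
    moreover have "c0 \<le> H r1 * exp (- Kc * (r1 - x))"
      unfolding c0_def using Hr1 Kc x r1 \<delta>
      by (intro mult_left_mono) (auto intro!: mult_left_le simp: mult_le_cancel_left1)
    moreover have "H x \<le> 2*\<bar>V0\<bar> * N x" using Hbounds x r1 by auto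
    ultimately have "c0 \<le> 2*\<bar>V0\<bar> * N x" by linarith
    then show ?thesis using aV by (simp add: divide_le_eq mult.commute)
  qed
  show False
  proof (rule int_hor[OF fin M])
    show "c0 / (2*\<bar>V0\<bar>) / (r1 - M) > 0" using c0 aV r1 by simp
    show "r1 - M > 0" using r1 by simp
    fix x assume x: "M < x" "x < M + (r1 - M)"
    have "c0 / (2*\<bar>V0\<bar>) / (r1 - M) * (x - M) \<le> c0 / (2*\<bar>V0\<bar>)"
      using x c0 aV by (simp add: field_simps)
    also have "\<dots> \<le> N x" using Nlow x by auto
    finally show "c0 / (2*\<bar>V0\<bar>) / (r1 - M) * (x - M) \<le> NN f1 f2 x" unfolding N_def .
  qed
qed

lemma caseB: assumes V0: "radV a Q e k \<omega> M = 0" shows False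
proof -
  define V1 where "V1 = 2*\<omega>*M + e*Q"
  have om0: "\<omega> \<noteq> 0" using om m by auto
  define \<sigma> where "\<sigma> = (if \<omega> > 0 then 1 else -1::real)"
  have sw: "\<sigma> * \<omega> = \<bar>\<omega>\<bar>" and sa: "\<bar>\<sigma>\<bar> = 1" and ss: "\<sigma> * \<sigma> = 1" unfolding \<sigma>_def using om0 by auto
  define N where "N = NN f1 f2"
  define R where "R = RR f1 f2"
  define I where "I = II f1 f2"
  define F where "F = FF M a Q m e k \<omega> lam f1 f2"
  have Nn: "\<And>x. N x \<ge> 0" unfolding N_def by (rule NN_nonneg)
  have Rb: "\<And>x. \<bar>R x\<bar> \<le> N x / 2" unfolding N_def R_def by (rule RR_bound)
  have W: "WW M a Q e k \<omega> x = V1 + \<omega>*(x-M)" if "x > M" for x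
    using W_id[OF that] V0 unfolding V1_def by simp
  have Fder: "(F has_real_derivative (\<omega> * N x + 2*m*R x)) (at x)" if "x > M" for x
    using rad_derivs(2)[OF sol that] V0 unfolding F_def N_def R_def by simp
  have Gnn: "\<sigma> * (\<omega> * N x + 2*m*R x) \<ge> (\<bar>\<omega>\<bar> - m) * N x" for x
  proof -
    have "\<bar>\<sigma> * (2*m*R x)\<bar> \<le> m * N x" using sa m Rb[of x] by (simp add: abs_mult)
    then have "\<sigma> * (2*m*R x) \<ge> - (m * N x)" by linarith
    moreover have "\<sigma> * (\<omega> * N x + 2*m*R x) = \<bar>\<omega>\<bar> * N x + \<sigma> * (2*m*R x)"
      by (simp only: distrib_left mult.assoc[symmetric] sw)
    moreover have "(\<bar>\<omega>\<bar> - m) * N x = \<bar>\<omega>\<bar> * N x - m * N x" by (rule left_diff_distrib)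
    ultimately show ?thesis by linarith
  qed
  have Fmono: "\<sigma> * F x \<le> \<sigma> * F y" if xy: "M < x" "x \<le> y" for x y
  proof (rule DERIV_nonneg_imp_nondecreasing[OF xy(2)])
    fix z assume z: "x \<le> z" "z \<le> y"
    have "((\<lambda>z. \<sigma> * F z) has_real_derivative \<sigma> * (\<omega> * N z + 2*m*R z)) (at z)"
      using Fder[of z] z xy by (auto intro!: derivative_eq_intros)
    moreover have "\<sigma> * (\<omega> * N z + 2*m*R z) \<ge> 0"
      using Gnn[of z] mult_nonneg_nonneg[of "\<bar>\<omega>\<bar> - m" "N z"] om Nn[of z] by linarith
    ultimately show "\<exists>D. ((\<lambda>z. \<sigma> * F z) has_real_derivative D) (at z) \<and> D \<ge> 0" by blast
  qed
  have Fb: "\<bar>F x\<bar> \<le> (\<bar>V1\<bar> + \<bar>\<omega>\<bar>*(x-M) + m*x + \<bar>lam\<bar>) * N x" if x: "x > M" for x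
  proof -
    have "F x = (V1 + \<omega>*(x-M)) * N x + ((2*m*x) * R x + (-2*lam) * I x)"
      unfolding F_def FF_def W[OF x] N_def R_def I_def by simp
    then have "\<bar>F x\<bar> \<le> \<bar>(V1 + \<omega>*(x-M)) * N x\<bar> + \<bar>(2*m*x) * R x + (-2*lam) * I x\<bar>"
      using abs_triangle_ineq by metis
    also have "\<dots> \<le> (\<bar>V1\<bar> + \<bar>\<omega>\<bar>*(x-M)) * N x + (\<bar>2*m*x\<bar> + \<bar>-2*lam\<bar>) / 2 * N x"
    proof (rule add_mono)
      have "\<bar>V1 + \<omega>*(x-M)\<bar> \<le> \<bar>V1\<bar> + \<bar>\<omega>\<bar>*(x-M)"
        using x abs_triangle_ineq[of V1 "\<omega>*(x-M)"] by (simp add: abs_mult)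
      then show "\<bar>(V1 + \<omega>*(x-M)) * N x\<bar> \<le> (\<bar>V1\<bar> + \<bar>\<omega>\<bar>*(x-M)) * N x"
        using Nn[of x] by (simp add: abs_mult mult_right_mono)
      show "\<bar>(2*m*x) * R x + (-2*lam) * I x\<bar> \<le> (\<bar>2*m*x\<bar> + \<bar>-2*lam\<bar>) / 2 * N x"
        unfolding R_def I_def N_def by (rule lin_bound)
    qed
    also have "(\<bar>2*m*x\<bar> + \<bar>-2*lam\<bar>) / 2 = m*x + \<bar>lam\<bar>" using m x M by (simp add: abs_mult)
    finally show ?thesis by (simp add: algebra_simps)
  qed
  define C4 where "C4 = \<bar>V1\<bar> + \<bar>\<omega>\<bar> + m + \<bar>lam\<bar>"
  have C4: "C4 > 0" unfolding C4_def using m abs_ge_zero[of V1] abs_ge_zero[of \<omega>] abs_ge_zero[of lam] by linarith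
  define C5 where "C5 = \<bar>V1\<bar> + \<bar>\<omega>\<bar> + m*(M+1) + \<bar>lam\<bar>"
  have mM: "m*(M+1) > 0" using m M by simp
  have C5: "C5 > 0" unfolding C5_def using mM abs_ge_zero[of V1] abs_ge_zero[of \<omega>] abs_ge_zero[of lam] by linarith
  have Fb4: "\<bar>F x\<bar> \<le> C4 * x * N x" if x: "x > M" "x \<ge> 1" for x
  proof -
    have "\<bar>V1\<bar> \<le> \<bar>V1\<bar> * x" "\<bar>\<omega>\<bar>*(x-M) \<le> \<bar>\<omega>\<bar> * x" "\<bar>lam\<bar> \<le> \<bar>lam\<bar> * x"
      using x M by (auto intro: mult_left_mono simp: mult_le_cancel_left1)
    then have "\<bar>V1\<bar> + \<bar>\<omega>\<bar>*(x-M) + m*x + \<bar>lam\<bar> \<le> C4 * x" unfolding C4_def by (simp add: algebra_simps)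
    then have "(\<bar>V1\<bar> + \<bar>\<omega>\<bar>*(x-M) + m*x + \<bar>lam\<bar>) * N x \<le> C4 * x * N x"
      by (rule mult_right_mono[OF _ Nn])
    then show ?thesis using Fb[OF x(1)] by linarith
  qed
  have Fb5: "\<bar>F x\<bar> \<le> C5 * N x" if x: "x > M" "x \<le> M + 1" for x
  proof -
    have "\<bar>\<omega>\<bar>*(x-M) \<le> \<bar>\<omega>\<bar>" using x by (intro mult_left_le) auto
    moreover have "m*x \<le> m*(M+1)" using x m by (intro mult_left_mono) auto
    ultimately have "\<bar>V1\<bar> + \<bar>\<omega>\<bar>*(x-M) + m*x + \<bar>lam\<bar> \<le> C5" unfolding C5_def by (simp add: algebra_simps)
    then have "(\<bar>V1\<bar> + \<bar>\<omega>\<bar>*(x-M) + m*x + \<bar>lam\<bar>) * N x \<le> C5 * N x"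
      by (rule mult_right_mono[OF _ Nn])
    then show ?thesis using Fb[OF x(1)] by linarith
  qed
  have F0: "F t = 0" if t: "t > M" for t
  proof -
    have le: "\<sigma> * F t \<le> 0"
    proof (rule ccontr)
      assume "\<not> \<sigma> * F t \<le> 0"
      then have pos: "\<sigma> * F t > 0" by simp
      show False
      proof (rule int_inf[OF fin M])
        show "\<sigma> * F t / C4 > 0" using pos C4 by simp
        show "max t 1 > M" using t by simp
        fix x assume x: "x \<ge> max t 1"
        have "\<sigma> * F t \<le> \<sigma> * F x" using Fmono t x by auto
        also have "\<dots> \<le> \<bar>F x\<bar>" using abs_ge_self[of "\<sigma> * F x"] sa by (simp add: abs_mult)
        also have "\<dots> \<le> C4 * x * N x" using Fb4 x t by auto
        finally show "\<sigma> * F t / C4 \<le> NN f1 f2 x * x" using C4 unfolding N_def by (simp add: divide_le_eq algebra_simps)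
      qed
    qed
    have ge: "\<sigma> * F t \<ge> 0"
    proof (rule ccontr)
      assume "\<not> \<sigma> * F t \<ge> 0"
      then have neg: "- (\<sigma> * F t) > 0" by simp
      show False
      proof (rule int_hor[OF fin M])
        have cpos: "- (\<sigma> * F t) / C5 > 0" using neg C5 by (intro divide_pos_pos)
        then show "- (\<sigma> * F t) / C5 > 0" .
        show "min (t - M) 1 > 0" using t by simp
        fix x assume x: "M < x" "x < M + min (t - M) 1"
        have "- (\<sigma> * F t) \<le> - (\<sigma> * F x)" using Fmono[of x t] x by auto
        also have "\<dots> \<le> \<bar>F x\<bar>" using abs_ge_minus_self[of "\<sigma> * F x"] sa by (simp add: abs_mult)
        also have "\<dots> \<le> C5 * N x" using Fb5 x by auto
        finally have "- (\<sigma> * F t) / C5 \<le> N x" unfolding pos_divide_le_eq[OF C5] by (metis mult.commute)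
        moreover have "- (\<sigma> * F t) / C5 * (x - M) \<le> - (\<sigma> * F t) / C5"
          using x less_imp_le[OF cpos] by (intro mult_left_le) auto
        ultimately show "- (\<sigma> * F t) / C5 * (x - M) \<le> NN f1 f2 x" unfolding N_def by linarith
      qed
    qed
    from le ge have "\<sigma> * F t = 0" by linarith
    then show ?thesis using sa by auto
  qed
  have G0: "\<omega> * N x + 2*m*R x = 0" if x: "x > M" for x
  proof -
    have "((\<lambda>_. 0) has_real_derivative (\<omega> * N x + 2*m*R x)) (at x)"
      by (rule has_field_derivative_transform_within_open[OF Fder[OF x], of "{M<..}"]) (use x F0 in auto)
    then show ?thesis using DERIV_const DERIV_unique by blast
  qed
  have omm: "\<bar>\<omega>\<bar> = m"
  proof (rule ccontr)
    assume "\<bar>\<omega>\<bar> \<noteq> m"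
    then have "\<bar>\<omega>\<bar> - m > 0" using om by simp
    moreover have "(\<bar>\<omega>\<bar> - m) * N r0 \<le> 0" using Gnn[of r0] G0[OF r0(1)] by simp
    moreover have "N r0 > 0" using r0 unfolding N_def by simp
    ultimately show False by (simp add: mult_le_0_iff)
  qed
  have om_eq: "\<omega> = \<sigma> * m"
  proof -
    have "\<omega> = \<sigma> * \<sigma> * \<omega>" using ss by simp
    also have "\<dots> = \<sigma> * \<bar>\<omega>\<bar>" using sw by (simp add: mult.assoc)
    finally show ?thesis using omm by simp
  qed
  have Req: "R x = - \<sigma> * N x / 2" if x: "x > M" for x
  proof -
    have "m * (\<sigma> * N x + 2 * R x) = 0" using G0[OF x] unfolding om_eq by (simp add: algebra_simps)
    then have "\<sigma> * N x + 2 * R x = 0" using m by simp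
    then show ?thesis by simp
  qed
  have I0: "I x = 0" if x: "x > M" for x
  proof -
    have "(R x)^2 = (N x)^2 / 4" unfolding Req[OF x] using ss by (simp add: power2_eq_square)
    then have "(I x)^2 \<le> 0" using RI_bound[of f1 f2 x] unfolding R_def I_def N_def by simp
    then show ?thesis by simp
  qed
  define \<beta> where "\<beta> = - 2 * \<sigma> * lam"
  have Nder: "(N has_real_derivative \<beta> * N x / (x - M)) (at x)" if x: "x > M" for x
  proof -
    have "4*m*x*I x + 4*lam*R x = \<beta> * N x" unfolding I0[OF x] Req[OF x] \<beta>_def by simp
    then show ?thesis using rad_derivs(1)[OF sol x] unfolding N_def R_def I_def by simp
  qed
  define P where "P = (\<lambda>x. N x * exp (- \<beta> * ln (x - M)))"
  have Pder: "(P has_real_derivative 0) (at x)" if x: "x > M" for x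
  proof -
    have "(P has_real_derivative (\<beta> * N x / (x - M)) * exp (- \<beta> * ln (x - M))
         + N x * (exp (- \<beta> * ln (x - M)) * (- \<beta> * (1 / (x - M))))) (at x)"
      unfolding P_def using x by (auto intro!: derivative_eq_intros Nder)
    moreover have "(\<beta> * N x / (x - M)) * exp (- \<beta> * ln (x - M))
         + N x * (exp (- \<beta> * ln (x - M)) * (- \<beta> * (1 / (x - M)))) = 0" by simp
    ultimately show ?thesis by simp
  qed
  have Pmono: "P u \<le> P v \<and> P v \<le> P u" if uv: "M < u" "u \<le> v" for u v
  proof -
    have "P u \<le> P v"
    proof (rule DERIV_nonneg_imp_nondecreasing[OF uv(2)])
      fix z assume z: "u \<le> z" "z \<le> v"
      then have "M < z" using uv by linarith
      then show "\<exists>y. (P has_real_derivative y) (at z) \<and> 0 \<le> y" using Pder by blast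
    qed
    moreover have "P v \<le> P u"
    proof (rule DERIV_nonpos_imp_nonincreasing[OF uv(2)])
      fix z assume z: "u \<le> z" "z \<le> v"
      then have "M < z" using uv by linarith
      then show "\<exists>y. (P has_real_derivative y) (at z) \<and> y \<le> 0" using Pder by blast
    qed
    ultimately show ?thesis by simp
  qed
  have Pconst: "P x = P r0" if x: "x > M" for x
  proof (cases "x \<le> r0")
    case True then show ?thesis using Pmono[OF x True] by simp
  next
    case False then show ?thesis using Pmono[OF r0(1), of x] by simp
  qed
  define C where "C = P r0"
  have C: "C > 0" unfolding C_def P_def using r0 unfolding N_def by simp
  have Nform: "N x = C * exp (\<beta> * ln (x - M))" if x: "x > M" for x
  proof -
    have "N x = P x * exp (\<beta> * ln (x - M))" unfolding P_def by (simp add: mult.assoc exp_add[symmetric])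
    then show ?thesis using Pconst[OF x] C_def by simp
  qed
  show False
  proof (cases "\<beta> \<le> 1")
    case True
    show False
    proof (rule int_hor[OF fin M C])
      show "(1::real) > 0" by simp
      fix x assume x: "M < x" "x < M + 1"
      have "ln (x - M) \<le> 0" using x by simp
      then have "ln (x - M) \<le> \<beta> * ln (x - M)" using True
        by (metis mult_right_mono_neg mult_1 )
      then have "exp (ln (x - M)) \<le> exp (\<beta> * ln (x - M))" by simp
      then have "x - M \<le> exp (\<beta> * ln (x - M))" using x by simp
      then have "C * (x - M) \<le> C * exp (\<beta> * ln (x - M))" using C by simp
      then show "C * (x - M) \<le> NN f1 f2 x" using Nform x unfolding N_def by simp
    qed
  next
    case False
    show False
    proof (rule int_inf[OF fin M C])
      show "M + 1 > M" by simp
      fix x assume x: "M + 1 \<le> x"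
      have "ln (x - M) \<ge> 0" using x by simp
      then have "0 \<le> \<beta> * ln (x - M)" using False by simp
      then have "1 \<le> exp (\<beta> * ln (x - M))" by simp
      then have "C \<le> N x" using Nform[of x] x M C by simp
      also have "N x \<le> N x * x" using x M Nn[of x] by (simp add: mult_le_cancel_left1)
      finally show "C \<le> NN f1 f2 x * x" unfolding N_def .
    qed
  qed
qed

end


lemma NN_cmod: "NN f1 f2 x = (cmod (f1 x))^2 + (cmod (f2 x))^2"
  unfolding NN_def cmod_power2 by simp

theorem mainTheorem5:
  fixes M a Q m e k \<omega> :: real
  assumes "M > 0" and "M^2 = a^2 + Q^2" and "m > 0" and "half_integer k"
    and "energy_eigenvalue M a Q m e k \<omega>"
  shows "m^2 - \<omega>^2 > 0"
proof (rule ccontr)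
  assume neg: "\<not> m^2 - \<omega>^2 > 0"
  have om: "m \<le> \<bar>\<omega>\<bar>"
  proof -
    have "m^2 \<le> \<bar>\<omega>\<bar>^2" using neg by simp
    then show ?thesis using assms(3) by (simp add: abs_le_square_iff[symmetric] power2_le_iff_abs_le)
  qed
  obtain lam f1 f2 where sol: "radial_solution M a Q m e k \<omega> lam f1 f2"
    and nz: "\<exists>r\<in>{M<..}. f1 r \<noteq> 0 \<or> f2 r \<noteq> 0"
    and fin0: "(\<integral>\<^sup>+ r \<in> {M<..}. ennreal ((cmod (f1 r))^2 + (cmod (f2 r))^2) * ennreal ((r^2 + a^2) / (r - M)^2) \<partial>lborel) < \<infinity>"
    using assms(5) unfolding energy_eigenvalue_def by blast
  from nz obtain r0 where r0: "r0 > M" "f1 r0 \<noteq> 0 \<or> f2 r0 \<noteq> 0" by auto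
  have Nr0: "NN f1 f2 r0 > 0" unfolding NN_cmod using r0(2)
    by (auto simp: add_pos_nonneg add_nonneg_pos)
  have fin: "(\<integral>\<^sup>+x\<in>{M<..}. ennreal (NN f1 f2 x) * ennreal ((x^2+a^2)/(x-M)^2) \<partial>lborel) < \<infinity>"
    using fin0 unfolding NN_cmod .
  show False
  proof (cases "radV a Q e k \<omega> M = 0")
    case True
    show False by (rule caseB[OF assms(1) assms(3) sol fin r0(1) Nr0 om True])
  next
    case False
    show False by (rule caseA[OF assms(1) assms(3) sol fin r0(1) Nr0 om False])
  qed
qed

end
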